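(* Let $T$ be a tournament of odd order $n\ge 5$ and let $c_5(T)$ be the number of directed cycles of length $5$ in $T$. Then $$c_5(T)\le \frac{(n+1)n(n-1)(n-2)(n-3)}{160},$$ with equality if and only if $T$ is doubly regular.
   Context: A tournament is an orientation of a complete graph. A tournament of order $n$ is doubly regular if it is regular (every out-degree equals $\frac{n-1}{2}$) and the out-set of every vertex induces a regular subtournament; equivalently, every two distinct vertices have exactly $\frac{n-3}{4}$ common out-neighbours (this forces $n\equiv 3\pmod 4$). *)

theory Defs
  imports Complex_Main
begin

definition tournament :: "'a set \<Rightarrow> ('a \<Rightarrow> 'a \<Rightarrow> bool) \<Rightarrow> bool" where
  "tournament V E \<longleftrightarrow> finite V \<and>
     (\<forall>x y. E x y \<longrightarrow> x \<in> V \<and> y \<in> V \<and> x \<noteq> y) \<and>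
     (\<forall>x\<in>V. \<forall>y\<in>V. x \<noteq> y \<longrightarrow> (E x y \<longleftrightarrow> \<not> E y x))"

definition out_nbrs :: "'a set \<Rightarrow> ('a \<Rightarrow> 'a \<Rightarrow> bool) \<Rightarrow> 'a \<Rightarrow> 'a set" where
  "out_nbrs S E u = {w \<in> S. E u w}"

definition regular_on :: "'a set \<Rightarrow> ('a \<Rightarrow> 'a \<Rightarrow> bool) \<Rightarrow> bool" where
  "regular_on S E \<longleftrightarrow> (\<forall>u\<in>S. 2 * card (out_nbrs S E u) + 1 = card S)"

definition doubly_regular :: "'a set \<Rightarrow> ('a \<Rightarrow> 'a \<Rightarrow> bool) \<Rightarrow> bool" where
  "doubly_regular V E \<longleftrightarrow> regular_on V E \<and> (\<forall>v\<in>V. regular_on (out_nbrs V E v) E)"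

definition cyc_arcs :: "'a list \<Rightarrow> ('a \<times> 'a) set" where
  "cyc_arcs xs = set (zip xs (rotate1 xs))"

text \<open>Directed cycles of length 5, each identified with its set of arcs.\<close>
definition cycles5 :: "'a set \<Rightarrow> ('a \<Rightarrow> 'a \<Rightarrow> bool) \<Rightarrow> ('a \<times> 'a) set set" where
  "cycles5 V E = {cyc_arcs xs | xs. length xs = 5 \<and> distinct xs \<and> set xs \<subseteq> V \<and>
                    (\<forall>(a, b) \<in> cyc_arcs xs. E a b)}"

definition c5 :: "'a set \<Rightarrow> ('a \<Rightarrow> 'a \<Rightarrow> bool) \<Rightarrow> nat" where
  "c5 V E = card (cycles5 V E)"

end

theory Submission
  imports Defs
begin

locale tourn =
  fixes V :: "'a set" and E :: "'a \<Rightarrow> 'a \<Rightarrow> bool"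
  assumes tour: "tournament V E"
begin

lemma fin: "finite V" using tour unfolding tournament_def by blast
lemma E_in: "E x y \<Longrightarrow> x \<in> V \<and> y \<in> V \<and> x \<noteq> y" using tour unfolding tournament_def by blast
lemma E_tot: "x \<in> V \<Longrightarrow> y \<in> V \<Longrightarrow> x \<noteq> y \<Longrightarrow> E x y \<or> E y x"
  using tour unfolding tournament_def by blast
lemma E_asym: "E x y \<Longrightarrow> \<not> E y x"
  using tour E_in unfolding tournament_def by blast

definition nn :: int where "nn = int (card V)"
definition ar :: "'a \<Rightarrow> 'a \<Rightarrow> int" where "ar u v = (if E u v then 1 else 0)"
definition sk :: "'a \<Rightarrow> 'a \<Rightarrow> int" where "sk u v = ar u v - ar v u"
definition nm :: "'a \<Rightarrow> 'a \<Rightarrow> int" where "nm u v = (if u = v then 0 else 1)"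
definition dl :: "'a \<Rightarrow> 'a \<Rightarrow> int" where "dl u v = (if u = v then 1 else 0)"
definition sc :: "'a \<Rightarrow> int" where "sc u = (\<Sum>w\<in>V. sk u w)"
definition sq2 :: "'a \<Rightarrow> 'a \<Rightarrow> int" where "sq2 u v = (\<Sum>w\<in>V. sk u w * sk w v)"
definition xm :: "'a \<Rightarrow> 'a \<Rightarrow> int" where "xm u v = sq2 u v + nn * dl u v - 1"
definition ym :: "'a \<Rightarrow> int" where "ym u = (\<Sum>v\<in>V. xm u v)"
definition sg :: int where "sg = (\<Sum>u\<in>V. (sc u)^2)"
definition xx :: int where "xx = (\<Sum>u\<in>V. \<Sum>v\<in>V. (xm u v)^2)"
definition yy :: int where "yy = (\<Sum>u\<in>V. (ym u)^2)"
definition dd :: int where "dd = xx - yy + (nn - 2)^2 * sg"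
definition pp :: "'a \<Rightarrow> 'a \<Rightarrow> int" where "pp v w = (\<Sum>x\<in>V. ar v x * ar x w)"
definition t5 :: int where "t5 = (\<Sum>u\<in>V. \<Sum>v\<in>V. \<Sum>w\<in>V. ar u v * pp v w * pp w u)"
definition bm :: "'a \<Rightarrow> 'a \<Rightarrow> int" where "bm v w = (nn - 1) * nm v w + xm v w"
definition km :: "'a \<Rightarrow> 'a \<Rightarrow> int" where "km v w = sc v - sc w - 2 * sk v w"

lemma sk_skew: "sk v u = - sk u v" unfolding sk_def by simp
lemma sk_diag[simp]: "sk u u = 0" unfolding sk_def by simp
lemma nm_sym: "nm v u = nm u v" unfolding nm_def by auto
lemma ar_split: "u \<in> V \<Longrightarrow> v \<in> V \<Longrightarrow> 2 * ar u v = nm u v + sk u v"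
  unfolding ar_def nm_def sk_def using E_tot E_asym E_in by auto
lemma ar_sum: "u \<in> V \<Longrightarrow> v \<in> V \<Longrightarrow> ar u v + ar v u = nm u v"
  unfolding ar_def nm_def using E_tot E_asym E_in by auto
lemma sk_sq: "u \<in> V \<Longrightarrow> v \<in> V \<Longrightarrow> sk u v * sk u v = nm u v"
  unfolding ar_def nm_def sk_def using E_tot E_asym E_in by auto

lemma sum_nm: "u \<in> V \<Longrightarrow> (\<Sum>v\<in>V. nm u v * f v) = (\<Sum>v\<in>V. f v) - f u"
proof -
  assume u: "u \<in> V"
  have "(\<Sum>v\<in>V. nm u v * f v) = (\<Sum>v\<in>V. f v - (if u = v then f v else 0))"
    by (rule sum.cong) (auto simp: nm_def)
  also have "\<dots> = (\<Sum>v\<in>V. f v) - f u" using u fin by (simp add: sum_subtractf)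
  finally show ?thesis .
qed
lemma sum_nm': "u \<in> V \<Longrightarrow> (\<Sum>v\<in>V. nm v u * f v) = (\<Sum>v\<in>V. f v) - f u"
proof -
  assume u: "u \<in> V"
  have "(\<Sum>v\<in>V. nm v u * f v) = (\<Sum>v\<in>V. nm u v * f v)"
    by (rule sum.cong) (auto simp: nm_def)
  then show ?thesis using sum_nm[OF u] by simp
qed
lemma sum_dl: "u \<in> V \<Longrightarrow> (\<Sum>v\<in>V. dl u v * f v) = f u"
proof -
  assume u: "u \<in> V"
  have "(\<Sum>v\<in>V. dl u v * f v) = (\<Sum>v\<in>V. (if u = v then f v else 0))"
    by (rule sum.cong) (auto simp: dl_def)
  also have "\<dots> = f u" using u fin by simp
  finally show ?thesis .
qed
lemma sum_dl': "u \<in> V \<Longrightarrow> (\<Sum>v\<in>V. dl v u * f v) = f u"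
  using sum_dl[of u f] by (simp add: dl_def eq_commute)

lemma sum_dl_r: "u \<in> V \<Longrightarrow> (\<Sum>v\<in>V. f v * dl u v) = f u"
  using sum_dl[of u f] by (simp add: mult.commute)

lemma card_nn: "(\<Sum>v\<in>V. (1::int)) = nn" unfolding nn_def by simp

lemma sk_col: "(\<Sum>u\<in>V. sk u v) = - sc v"
  unfolding sc_def by (subst sk_skew) (simp add: sum_negf)

lemma sum_sc: "(\<Sum>u\<in>V. sc u) = 0"
proof -
  have "(\<Sum>u\<in>V. sc u) = (\<Sum>u\<in>V. \<Sum>w\<in>V. sk u w)" unfolding sc_def ..
  also have "\<dots> = (\<Sum>w\<in>V. \<Sum>u\<in>V. sk u w)" by (rule sum.swap)
  also have "\<dots> = - (\<Sum>w\<in>V. sc w)" by (simp add: sk_col sum_negf)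
  finally show ?thesis unfolding sc_def by simp
qed

lemma sq2_sym: "sq2 u v = sq2 v u"
  unfolding sq2_def by (rule sum.cong) (auto simp: sk_skew[of u] sk_skew[of _ v])
lemma xm_sym: "xm u v = xm v u"
  unfolding xm_def using sq2_sym by (simp add: dl_def eq_commute)

lemma sq2_diag: "u \<in> V \<Longrightarrow> sq2 u u = 1 - nn"
proof -
  assume u: "u \<in> V"
  have "sq2 u u = - (\<Sum>w\<in>V. nm u w)" unfolding sq2_def
    by (subst sum_negf[symmetric], rule sum.cong) (auto simp: sk_skew[of w u for w] sk_sq u)
  also have "\<dots> = 1 - nn" using sum_nm[OF u, of "\<lambda>_. 1"] card_nn by simp
  finally show ?thesis .
qed
lemma xm_diag: "u \<in> V \<Longrightarrow> xm u u = 0"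
  unfolding xm_def using sq2_diag by (simp add: dl_def)

lemma ym_alt: "u \<in> V \<Longrightarrow> ym u = (\<Sum>w\<in>V. sk u w * sc w)"
proof -
  assume u: "u \<in> V"
  have "ym u = (\<Sum>v\<in>V. sq2 u v) + nn * (\<Sum>v\<in>V. dl u v) - nn"
    unfolding ym_def xm_def using card_nn by (simp add: sum.distrib sum_subtractf sum_distrib_left)
  also have "(\<Sum>v\<in>V. dl u v) = 1" using sum_dl[OF u, of "\<lambda>_. 1"] by simp
  also have "(\<Sum>v\<in>V. sq2 u v) = (\<Sum>w\<in>V. sk u w * sc w)"
    unfolding sq2_def sc_def by (subst sum.swap) (simp add: sum_distrib_left)
  finally show ?thesis by simp
qed

lemma sum_ym: "(\<Sum>u\<in>V. ym u) = - sg"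
proof -
  have "(\<Sum>u\<in>V. ym u) = (\<Sum>u\<in>V. \<Sum>w\<in>V. sk u w * sc w)" by (rule sum.cong) (auto simp: ym_alt)
  also have "\<dots> = (\<Sum>w\<in>V. (\<Sum>u\<in>V. sk u w) * sc w)" by (subst sum.swap) (simp add: sum_distrib_right)
  also have "\<dots> = - sg" unfolding sg_def by (simp add: sk_col sum_negf power2_eq_square)
  finally show ?thesis .
qed

lemma sum_xm: "(\<Sum>u\<in>V. \<Sum>v\<in>V. xm u v) = - sg"
  using sum_ym unfolding ym_def .

lemma sq2_xm: "sq2 u v = xm u v - nn * dl u v + 1" unfolding xm_def by simp

lemma sk_sum_sym: "(\<Sum>u\<in>V. sk u w * sk u w') = - sq2 w w'"
  unfolding sq2_def by (subst sum_negf[symmetric], rule sum.cong) (auto simp: sk_skew[of _ w])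

lemma sum_sk_sc_col: "v \<in> V \<Longrightarrow> (\<Sum>u\<in>V. sc u * sk u v) = - ym v"
proof -
  assume v: "v \<in> V"
  have "(\<Sum>u\<in>V. sc u * sk u v) = - (\<Sum>u\<in>V. sk v u * sc u)"
    by (subst sum_negf[symmetric], rule sum.cong) (auto simp: sk_skew[of _ v])
  then show ?thesis using ym_alt[OF v] by simp
qed

lemma quad_skew0: "(\<Sum>u\<in>V. \<Sum>v\<in>V. sk u v * f u * f v) = 0"
proof -
  have "(\<Sum>u\<in>V. \<Sum>v\<in>V. sk u v * f u * f v) = (\<Sum>v\<in>V. \<Sum>u\<in>V. sk u v * f u * f v)" by (rule sum.swap)
  also have "\<dots> = - (\<Sum>v\<in>V. \<Sum>u\<in>V. sk v u * f v * f u)"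
    unfolding sum_negf[symmetric] by (rule sum.cong[OF refl], rule sum.cong[OF refl]) (simp add: sk_def algebra_simps)
  finally show ?thesis by simp
qed

lemma sum_ym_sc: "(\<Sum>u\<in>V. ym u * sc u) = 0"
proof -
  have "(\<Sum>u\<in>V. ym u * sc u) = (\<Sum>u\<in>V. \<Sum>w\<in>V. sk u w * sc u * sc w)"
    by (rule sum.cong) (auto simp: ym_alt sum_distrib_left sum_distrib_right ac_simps)
  also have "\<dots> = 0" by (rule quad_skew0)
  finally show ?thesis .
qed

lemma sXs: "(\<Sum>v\<in>V. \<Sum>w\<in>V. xm v w * (sc v * sc w)) = nn * sg - yy"
proof -
  have "yy = (\<Sum>u\<in>V. (\<Sum>w\<in>V. sk u w * sc w) * (\<Sum>w'\<in>V. sk u w' * sc w'))"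
    unfolding yy_def power2_eq_square by (rule sum.cong) (auto simp: ym_alt)
  also have "\<dots> = (\<Sum>u\<in>V. \<Sum>w\<in>V. \<Sum>w'\<in>V. sk u w * sc w * (sk u w' * sc w'))"
    by (simp add: sum_product)
  also have "\<dots> = (\<Sum>w\<in>V. \<Sum>u\<in>V. \<Sum>w'\<in>V. sk u w * sc w * (sk u w' * sc w'))"
    by (rule sum.swap)
  also have "\<dots> = (\<Sum>w\<in>V. \<Sum>w'\<in>V. \<Sum>u\<in>V. sk u w * sc w * (sk u w' * sc w'))"
    by (rule sum.cong[OF refl], rule sum.swap)
  also have "\<dots> = (\<Sum>w\<in>V. \<Sum>w'\<in>V. sc w * sc w' * (\<Sum>u\<in>V. sk u w * sk u w'))"
    by (simp add: sum_distrib_left ac_simps)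
  also have "\<dots> = (\<Sum>w\<in>V. \<Sum>w'\<in>V. - (xm w w' * (sc w * sc w')) + nn * (dl w w' * sc w * sc w') - sc w * sc w')"
    by (simp add: sk_sum_sym sq2_xm algebra_simps)
  also have "\<dots> = - (\<Sum>w\<in>V. \<Sum>w'\<in>V. xm w w' * (sc w * sc w')) + nn * (\<Sum>w\<in>V. \<Sum>w'\<in>V. dl w w' * sc w * sc w')
      - (\<Sum>w\<in>V. \<Sum>w'\<in>V. sc w * sc w')"
    by (simp add: sum.distrib sum_subtractf sum_negf sum_distrib_left)
  also have "(\<Sum>w\<in>V. \<Sum>w'\<in>V. sc w * sc w') = 0"
    by (simp add: sum_product[symmetric] sum_sc)
  also have "(\<Sum>w\<in>V. \<Sum>w'\<in>V. dl w w' * sc w * sc w') = sg"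
    unfolding sg_def power2_eq_square by (rule sum.cong) (auto simp: sum_dl[where f="\<lambda>w'. sc _ * sc w'", simplified mult.assoc] mult.assoc)
  finally show ?thesis by simp
qed

lemma bm_sym: "bm v w = bm w v" unfolding bm_def using xm_sym[of v w] nm_sym[of v w] by simp
lemma km_skew: "km v w = - km w v" unfolding km_def using sk_skew[of w v] by simp

lemma pp_formula: "v \<in> V \<Longrightarrow> w \<in> V \<Longrightarrow> 4 * pp v w = bm v w + km v w"
proof -
  assume v: "v \<in> V" and w: "w \<in> V"
  have e1: "4 * pp v w = (\<Sum>x\<in>V. (2 * ar v x) * (2 * ar x w))"
    unfolding pp_def by (simp add: sum_distrib_left ac_simps)
  have e2: "(\<Sum>x\<in>V. (2 * ar v x) * (2 * ar x w)) = (\<Sum>x\<in>V. (nm v x + sk v x) * (nm x w + sk x w))"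
    by (rule sum.cong) (auto simp: ar_split v w)
  have e3: "(\<Sum>x\<in>V. (nm v x + sk v x) * (nm x w + sk x w)) = (\<Sum>x\<in>V. nm v x * nm x w) + (\<Sum>x\<in>V. nm v x * sk x w) + (\<Sum>x\<in>V. nm w x * sk v x)
      + sq2 v w"
  proof -
    have "(nm v x + sk v x) * (nm x w + sk x w) = nm v x * nm x w + nm v x * sk x w + nm w x * sk v x + sk v x * sk x w" for x
      by (simp add: nm_def algebra_simps)
    then show ?thesis unfolding sq2_def by (simp add: sum.distrib)
  qed
  have e4: "(\<Sum>x\<in>V. nm v x * nm x w) = (\<Sum>x\<in>V. nm x w) - nm v w" using sum_nm[OF v, of "\<lambda>x. nm x w"] by simp
  have e5: "(\<Sum>x\<in>V. nm x w) = nn - 1" using sum_nm'[OF w, of "\<lambda>_. 1"] card_nn by simp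
  have e6: "(\<Sum>x\<in>V. nm v x * sk x w) = - sc w - sk v w" using sum_nm[OF v, of "\<lambda>x. sk x w"] sk_col by simp
  have e7: "(\<Sum>x\<in>V. nm w x * sk v x) = sc v - sk v w" using sum_nm[OF w, of "sk v"] unfolding sc_def by simp
  have "4 * pp v w = nn - 1 - nm v w + (- sc w - sk v w) + (sc v - sk v w) + sq2 v w"
    using e1 e2 e3 e4 e5 e6 e7 by simp
  then show ?thesis
    by (cases "v = w") (simp_all add: bm_def km_def xm_def nm_def dl_def algebra_simps)
qed

lemma reord_a: "(\<Sum>u\<in>V. \<Sum>v\<in>V. \<Sum>w\<in>V. f u v w) = (\<Sum>v\<in>V. \<Sum>w\<in>V. \<Sum>u\<in>V. f u v w)"
proof -
  have "(\<Sum>u\<in>V. \<Sum>v\<in>V. \<Sum>w\<in>V. f u v w) = (\<Sum>v\<in>V. \<Sum>u\<in>V. \<Sum>w\<in>V. f u v w)" by (rule sum.swap)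
  also have "\<dots> = (\<Sum>v\<in>V. \<Sum>w\<in>V. \<Sum>u\<in>V. f u v w)" by (rule sum.cong[OF refl], rule sum.swap)
  finally show ?thesis .
qed
lemma reord_b: "(\<Sum>u\<in>V. \<Sum>v\<in>V. \<Sum>w\<in>V. f u v w) = (\<Sum>w\<in>V. \<Sum>u\<in>V. \<Sum>v\<in>V. f u v w)"
proof -
  have "(\<Sum>u\<in>V. \<Sum>v\<in>V. \<Sum>w\<in>V. f u v w) = (\<Sum>u\<in>V. \<Sum>w\<in>V. \<Sum>v\<in>V. f u v w)" by (rule sum.cong[OF refl], rule sum.swap)
  also have "\<dots> = (\<Sum>w\<in>V. \<Sum>u\<in>V. \<Sum>v\<in>V. f u v w)" by (rule sum.swap)
  finally show ?thesis .
qed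

definition tA :: int where "tA = (\<Sum>u\<in>V. \<Sum>v\<in>V. \<Sum>w\<in>V. nm u v * bm v w * bm w u)"
definition tB :: int where "tB = (\<Sum>u\<in>V. \<Sum>v\<in>V. \<Sum>w\<in>V. nm u v * km v w * km w u)"
definition tC :: int where "tC = (\<Sum>u\<in>V. \<Sum>v\<in>V. \<Sum>w\<in>V. sk u v * bm v w * km w u + sk u v * km v w * bm w u)"

lemma t5_split: "32 * t5 = tA + tB + tC"
proof -
  define F where "F u v w = (nm u v + sk u v) * (bm v w + km v w) * (bm w u + km w u)" for u v w
  have "32 * t5 = (\<Sum>u\<in>V. \<Sum>v\<in>V. \<Sum>w\<in>V. F u v w)"
    unfolding t5_def sum_distrib_left
  proof (intro sum.cong refl)
    fix u v w assume u: "u \<in> V" and v: "v \<in> V" and w: "w \<in> V"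
    have "32 * (ar u v * pp v w * pp w u) = (2 * ar u v) * (4 * pp v w) * (4 * pp w u)" by simp
    also have "\<dots> = F u v w" unfolding F_def using ar_split[OF u v] pp_formula[OF v w] pp_formula[OF w u] by simp
    finally show "32 * (ar u v * pp v w * pp w u) = F u v w" .
  qed
  moreover have "(\<Sum>u\<in>V. \<Sum>v\<in>V. \<Sum>w\<in>V. F u v w) = (\<Sum>u\<in>V. \<Sum>v\<in>V. \<Sum>w\<in>V. F v u w)"
    by (rule sum.swap)
  moreover have "(\<Sum>u\<in>V. \<Sum>v\<in>V. \<Sum>w\<in>V. F u v w + F v u w) = 2 * (tA + tB + tC)"
    unfolding tA_def tB_def tC_def sum.distrib[symmetric] sum_distrib_left
  proof (intro sum.cong refl)
    fix u v w
    have "F v u w = (nm u v - sk u v) * (bm v w - km v w) * (bm w u - km w u)"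
      unfolding F_def using nm_sym[of v u] sk_skew[of v u] bm_sym[of u w] km_skew[of u w] bm_sym[of w v] km_skew[of w v]
      by simp
    then show "F u v w + F v u w = 2 * (nm u v * bm v w * bm w u + nm u v * km v w * km w u +
          (sk u v * bm v w * km w u + sk u v * km v w * bm w u))"
      unfolding F_def by (simp add: algebra_simps)
  qed
  ultimately show ?thesis by (simp add: sum.distrib)
qed

lemma tri_sym:
  assumes sym: "\<And>v w. Z v w = Z w v"
  shows "(\<Sum>u\<in>V. \<Sum>v\<in>V. \<Sum>w\<in>V. nm u v * Z v w * Z w u) = (\<Sum>w\<in>V. (\<Sum>v\<in>V. Z w v)^2) - (\<Sum>v\<in>V. \<Sum>w\<in>V. (Z v w)^2)"
proof -
  have "(\<Sum>u\<in>V. \<Sum>v\<in>V. \<Sum>w\<in>V. nm u v * Z v w * Z w u) = (\<Sum>v\<in>V. \<Sum>w\<in>V. \<Sum>u\<in>V. nm u v * Z v w * Z w u)"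
    by (rule reord_a)
  also have "\<dots> = (\<Sum>v\<in>V. \<Sum>w\<in>V. Z v w * (\<Sum>u\<in>V. nm u v * Z w u))"
    by (simp add: sum_distrib_left ac_simps)
  also have "\<dots> = (\<Sum>v\<in>V. \<Sum>w\<in>V. Z v w * (\<Sum>u\<in>V. Z w u) - Z v w * Z w v)"
    by (intro sum.cong refl) (simp add: sum_nm' algebra_simps)
  also have "\<dots> = (\<Sum>v\<in>V. \<Sum>w\<in>V. Z v w * (\<Sum>u\<in>V. Z w u)) - (\<Sum>v\<in>V. \<Sum>w\<in>V. (Z v w)^2)"
    by (simp add: sum_subtractf power2_eq_square sym[of _ v for v])
  also have "(\<Sum>v\<in>V. \<Sum>w\<in>V. Z v w * (\<Sum>u\<in>V. Z w u)) = (\<Sum>w\<in>V. \<Sum>v\<in>V. Z v w * (\<Sum>u\<in>V. Z w u))"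
    by (rule sum.swap)
  also have "\<dots> = (\<Sum>w\<in>V. (\<Sum>v\<in>V. Z w v)^2)"
    by (simp add: power2_eq_square sum_distrib_right sym[of _ w for w])
  finally show ?thesis .
qed

lemma tri_skew:
  assumes sk: "\<And>v w. Z v w = - Z w v"
  shows "(\<Sum>u\<in>V. \<Sum>v\<in>V. \<Sum>w\<in>V. nm u v * Z v w * Z w u) = (\<Sum>v\<in>V. \<Sum>w\<in>V. (Z v w)^2) - (\<Sum>w\<in>V. (\<Sum>v\<in>V. Z w v)^2)"
proof -
  have "(\<Sum>u\<in>V. \<Sum>v\<in>V. \<Sum>w\<in>V. nm u v * Z v w * Z w u) = (\<Sum>v\<in>V. \<Sum>w\<in>V. \<Sum>u\<in>V. nm u v * Z v w * Z w u)"
    by (rule reord_a)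
  also have "\<dots> = (\<Sum>v\<in>V. \<Sum>w\<in>V. Z v w * (\<Sum>u\<in>V. nm u v * Z w u))"
    by (simp add: sum_distrib_left ac_simps)
  also have "\<dots> = (\<Sum>v\<in>V. \<Sum>w\<in>V. Z v w * (\<Sum>u\<in>V. Z w u) + (Z v w)^2)"
  proof (intro sum.cong refl)
    fix v w assume "v \<in> V"
    then have "(\<Sum>u\<in>V. nm u v * Z w u) = (\<Sum>u\<in>V. Z w u) - Z w v" by (rule sum_nm')
    then show "Z v w * (\<Sum>u\<in>V. nm u v * Z w u) = Z v w * (\<Sum>u\<in>V. Z w u) + (Z v w)^2"
      using sk[of w v] by (simp add: algebra_simps power2_eq_square)
  qed
  also have "\<dots> = (\<Sum>v\<in>V. \<Sum>w\<in>V. Z v w * (\<Sum>u\<in>V. Z w u)) + (\<Sum>v\<in>V. \<Sum>w\<in>V. (Z v w)^2)"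
    by (simp add: sum.distrib)
  also have "(\<Sum>v\<in>V. \<Sum>w\<in>V. Z v w * (\<Sum>u\<in>V. Z w u)) = (\<Sum>w\<in>V. \<Sum>v\<in>V. Z v w * (\<Sum>u\<in>V. Z w u))"
    by (rule sum.swap)
  also have "\<dots> = (\<Sum>w\<in>V. (\<Sum>v\<in>V. Z v w) * (\<Sum>u\<in>V. Z w u))"
    by (simp add: sum_distrib_right)
  also have "\<dots> = - (\<Sum>w\<in>V. (\<Sum>v\<in>V. Z w v)^2)"
  proof -
    have "(\<Sum>v\<in>V. Z v w) = - (\<Sum>v\<in>V. Z w v)" for w
      by (subst sum_negf[symmetric]) (rule sum.cong, auto intro: sk)
    then show ?thesis by (simp add: power2_eq_square sum_negf)
  qed
  finally show ?thesis by simp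
qed

lemma at_nm: "(\<Sum>v\<in>V. \<Sum>w\<in>V. nm v w) = nn * (nn - 1)"
proof -
  have "(\<Sum>v\<in>V. \<Sum>w\<in>V. nm v w) = (\<Sum>v\<in>V. nn - 1)"
    by (rule sum.cong[OF refl]) (use sum_nm[of _ "\<lambda>_. 1"] card_nn in auto)
  then show ?thesis using card_nn by (simp add: sum_distrib_right[symmetric])
qed
lemma at_nm_x: "(\<Sum>v\<in>V. \<Sum>w\<in>V. nm v w * xm v w) = - sg"
proof -
  have "(\<Sum>v\<in>V. \<Sum>w\<in>V. nm v w * xm v w) = (\<Sum>v\<in>V. ym v)"
    by (rule sum.cong[OF refl]) (simp add: sum_nm ym_def xm_diag)
  then show ?thesis using sum_ym by simp
qed
lemma at_nm_y1: "(\<Sum>v\<in>V. \<Sum>w\<in>V. nm v w * ym v) = - (nn - 1) * sg"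
proof -
  have "(\<Sum>v\<in>V. \<Sum>w\<in>V. nm v w * ym v) = (\<Sum>v\<in>V. (nn - 1) * ym v)"
    by (rule sum.cong[OF refl]) (use sum_nm[of _ "\<lambda>_. 1"] card_nn in \<open>auto simp: sum_distrib_right[symmetric]\<close>)
  also have "\<dots> = (nn - 1) * (\<Sum>v\<in>V. ym v)" by (simp add: sum_distrib_left)
  finally show ?thesis using sum_ym by (simp add: algebra_simps)
qed
lemma at_nm_y2: "(\<Sum>v\<in>V. \<Sum>w\<in>V. nm v w * ym w) = - (nn - 1) * sg"
proof -
  have "(\<Sum>v\<in>V. \<Sum>w\<in>V. nm v w * ym w) = (\<Sum>w\<in>V. \<Sum>v\<in>V. nm w v * ym w)"
    by (subst sum.swap) (simp add: nm_sym[of _ "x" for x])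
  then show ?thesis using at_nm_y1 by (simp add: algebra_simps)
qed
lemma at_nm_ss: "(\<Sum>v\<in>V. \<Sum>w\<in>V. nm v w * (sc v * sc w)) = - sg"
proof -
  have "(\<Sum>v\<in>V. \<Sum>w\<in>V. nm v w * (sc v * sc w)) = (\<Sum>v\<in>V. sc v * (\<Sum>w\<in>V. sc w) - sc v * sc v)"
    by (rule sum.cong[OF refl]) (simp add: sum_nm[of _ "\<lambda>w. sc _ * sc w", simplified] sum_distrib_left)
  then show ?thesis using sum_sc unfolding sg_def by (simp add: sum_subtractf power2_eq_square sum_negf)
qed
lemma at_nm_dl: "(\<Sum>v\<in>V. \<Sum>w\<in>V. nm v w * dl v w) = 0"
proof -
  have h: "nm v w * dl v w = 0" for v w by (simp add: nm_def dl_def)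
  show ?thesis by (simp only: h sum.neutral_const)
qed
lemma at_x_dl: "(\<Sum>v\<in>V. \<Sum>w\<in>V. xm v w * dl v w) = 0"
proof -
  have "(\<Sum>v\<in>V. \<Sum>w\<in>V. xm v w * dl v w) = (\<Sum>v\<in>V. xm v v)"
    by (rule sum.cong[OF refl]) (simp add: sum_dl_r)
  then show ?thesis by (simp add: xm_diag)
qed
lemma at_x_y1: "(\<Sum>v\<in>V. \<Sum>w\<in>V. xm v w * ym v) = yy"
  unfolding yy_def ym_def by (simp add: power2_eq_square sum_distrib_right)
lemma at_x_y2: "(\<Sum>v\<in>V. \<Sum>w\<in>V. xm v w * ym w) = yy"
proof -
  have "(\<Sum>v\<in>V. \<Sum>w\<in>V. xm v w * ym w) = (\<Sum>w\<in>V. \<Sum>v\<in>V. xm w v * ym w)"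
    by (subst sum.swap) (simp add: xm_sym[of _ "x" for x])
  then show ?thesis using at_x_y1 by simp
qed
lemma at_x_x: "(\<Sum>v\<in>V. \<Sum>w\<in>V. xm v w * xm v w) = xx"
  unfolding xx_def by (simp add: power2_eq_square)
lemma at_sk_sk: "(\<Sum>v\<in>V. \<Sum>w\<in>V. sk v w * sk v w) = nn * (nn - 1)"
  using at_nm by (simp add: sk_sq)
lemma at_sc_sk1: "(\<Sum>v\<in>V. \<Sum>w\<in>V. sc v * sk v w) = sg"
  unfolding sg_def by (simp add: sum_distrib_left[symmetric] sc_def[symmetric] power2_eq_square)
lemma at_sc_sk2: "(\<Sum>v\<in>V. \<Sum>w\<in>V. sc w * sk v w) = - sg"
proof -
  have "(\<Sum>v\<in>V. \<Sum>w\<in>V. sc w * sk v w) = (\<Sum>w\<in>V. sc w * (\<Sum>v\<in>V. sk v w))"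
    by (subst sum.swap) (simp add: sum_distrib_left)
  then show ?thesis unfolding sg_def by (simp add: sk_col power2_eq_square sum_negf)
qed
lemma at_ss: "(\<Sum>v\<in>V. \<Sum>w\<in>V. sc v * sc w) = 0"
  by (simp add: sum_product[symmetric] sum_sc)
lemma at_sc2: "(\<Sum>v\<in>V. \<Sum>w\<in>V. sc v * sc v) = nn * sg"
  unfolding sg_def using card_nn by (simp add: power2_eq_square sum_distrib_left)
lemma at_sc2': "(\<Sum>v\<in>V. \<Sum>w\<in>V. sc w * sc w) = nn * sg"
  unfolding sg_def using card_nn by (simp add: power2_eq_square sum_distrib_right[symmetric] mult.commute)

lemma tA_val: "tA = nn * (nn - 1)^3 * (nn - 2) - 2 * (nn - 1) * (nn - 2) * sg + yy - xx"
proof -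
  have rho: "(\<Sum>v\<in>V. bm w v) = (nn - 1) * (nn - 1) + ym w" if w: "w \<in> V" for w
  proof -
    have "(\<Sum>v\<in>V. bm w v) = (nn - 1) * (\<Sum>v\<in>V. nm w v) + ym w"
      unfolding bm_def ym_def by (simp add: sum.distrib sum_distrib_left)
    also have "(\<Sum>v\<in>V. nm w v) = nn - 1" using sum_nm[OF w, of "\<lambda>_. 1"] card_nn by simp
    finally show ?thesis .
  qed
  have s1: "(\<Sum>w\<in>V. (\<Sum>v\<in>V. bm w v)^2) = (\<Sum>w\<in>V. ((nn - 1) * (nn - 1) * ((nn - 1) * (nn - 1))) * 1 + (2 * ((nn - 1) * (nn - 1))) * ym w + ym w * ym w)"
    by (rule sum.cong[OF refl]) (simp add: rho power2_eq_square algebra_simps)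
  also have "\<dots> = ((nn - 1) * (nn - 1) * ((nn - 1) * (nn - 1))) * nn + (2 * ((nn - 1) * (nn - 1))) * (\<Sum>w\<in>V. ym w) + yy"
    unfolding yy_def power2_eq_square[of "ym _"] using card_nn
    by (simp add: sum.distrib sum_distrib_left[symmetric])
  finally have s1': "(\<Sum>w\<in>V. (\<Sum>v\<in>V. bm w v)^2) = ((nn - 1) * (nn - 1) * ((nn - 1) * (nn - 1))) * nn - (2 * ((nn - 1) * (nn - 1))) * sg + yy"
    using sum_ym by simp
  have s2: "(\<Sum>v\<in>V. \<Sum>w\<in>V. (bm v w)^2) = (\<Sum>v\<in>V. \<Sum>w\<in>V. (nn - 1)^2 * nm v w + 2 * (nn - 1) * (nm v w * xm v w) + xm v w * xm v w)"
    by (intro sum.cong refl) (simp add: bm_def nm_def power2_eq_square algebra_simps)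
  also have "\<dots> = (nn - 1)^2 * (\<Sum>v\<in>V. \<Sum>w\<in>V. nm v w) + 2 * (nn - 1) * (\<Sum>v\<in>V. \<Sum>w\<in>V. nm v w * xm v w) + (\<Sum>v\<in>V. \<Sum>w\<in>V. xm v w * xm v w)"
    by (simp only: sum.distrib sum_distrib_left[symmetric])
  finally have s2': "(\<Sum>v\<in>V. \<Sum>w\<in>V. (bm v w)^2) = (nn - 1)^2 * (nn * (nn - 1)) - 2 * (nn - 1) * sg + xx"
    using at_nm at_nm_x at_x_x by simp
  have "tA = (\<Sum>w\<in>V. (\<Sum>v\<in>V. bm w v)^2) - (\<Sum>v\<in>V. \<Sum>w\<in>V. (bm v w)^2)"
    unfolding tA_def by (rule tri_sym) (rule bm_sym)
  then show ?thesis unfolding s1' s2' by (simp add: algebra_simps power2_eq_square power3_eq_cube power4_eq_xxxx)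
qed

lemma tB_val: "tB = 4 * nn * (nn - 1) - (nn * nn - 6 * nn + 12) * sg"
proof -
  have rho: "(\<Sum>v\<in>V. km w v) = (nn - 2) * sc w" if w: "w \<in> V" for w
  proof -
    have "(\<Sum>v\<in>V. km w v) = (\<Sum>v\<in>V. sc w) - (\<Sum>v\<in>V. sc v) - 2 * (\<Sum>v\<in>V. sk w v)"
      unfolding km_def by (simp add: sum_subtractf sum_distrib_left)
    then show ?thesis using sum_sc card_nn unfolding sc_def[symmetric] by (simp add: algebra_simps)
  qed
  have s1: "(\<Sum>w\<in>V. (\<Sum>v\<in>V. km w v)^2) = (\<Sum>w\<in>V. ((nn - 2) * (nn - 2)) * (sc w * sc w))"
    by (rule sum.cong[OF refl]) (simp add: rho power2_eq_square algebra_simps)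
  also have "\<dots> = (nn - 2) * (nn - 2) * sg"
    unfolding sg_def power2_eq_square by (simp only: sum_distrib_left[symmetric])
  finally have s1': "(\<Sum>w\<in>V. (\<Sum>v\<in>V. km w v)^2) = (nn - 2) * (nn - 2) * sg" .
  have s2: "(\<Sum>v\<in>V. \<Sum>w\<in>V. (km v w)^2) = (\<Sum>v\<in>V. \<Sum>w\<in>V. sc v * sc v + sc w * sc w + 4 * (sk v w * sk v w)
       - 2 * (sc v * sc w) - 4 * (sc v * sk v w) + 4 * (sc w * sk v w))"
    by (intro sum.cong refl) (simp add: km_def power2_eq_square algebra_simps)
  also have "\<dots> = (\<Sum>v\<in>V. \<Sum>w\<in>V. sc v * sc v) + (\<Sum>v\<in>V. \<Sum>w\<in>V. sc w * sc w) + 4 * (\<Sum>v\<in>V. \<Sum>w\<in>V. sk v w * sk v w)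
       - 2 * (\<Sum>v\<in>V. \<Sum>w\<in>V. sc v * sc w) - 4 * (\<Sum>v\<in>V. \<Sum>w\<in>V. sc v * sk v w) + 4 * (\<Sum>v\<in>V. \<Sum>w\<in>V. sc w * sk v w)"
    by (simp only: sum.distrib sum_subtractf sum_distrib_left[symmetric])
  finally have s2': "(\<Sum>v\<in>V. \<Sum>w\<in>V. (km v w)^2) = nn * sg + nn * sg + 4 * (nn * (nn - 1)) - 2 * 0 - 4 * sg + 4 * (- sg)"
    unfolding at_sc2 at_sc2' at_sk_sk at_ss at_sc_sk1 at_sc_sk2 .
  have "tB = (\<Sum>v\<in>V. \<Sum>w\<in>V. (km v w)^2) - (\<Sum>w\<in>V. (\<Sum>v\<in>V. km w v)^2)"
    unfolding tB_def by (rule tri_skew) (rule km_skew)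
  then show ?thesis unfolding s1' s2' by (simp add: algebra_simps)
qed

lemma KS: "w \<in> V \<Longrightarrow> v \<in> V \<Longrightarrow> (\<Sum>u\<in>V. km w u * sk u v) = - (sc w * sc v) + ym v - 2 * sq2 w v"
proof -
  assume w: "w \<in> V" and v: "v \<in> V"
  have "(\<Sum>u\<in>V. km w u * sk u v) = (\<Sum>u\<in>V. sc w * sk u v - sc u * sk u v - 2 * (sk w u * sk u v))"
    by (rule sum.cong) (simp_all add: km_def algebra_simps)
  also have "\<dots> = sc w * (\<Sum>u\<in>V. sk u v) - (\<Sum>u\<in>V. sc u * sk u v) - 2 * (\<Sum>u\<in>V. sk w u * sk u v)"
    by (simp only: sum_subtractf sum_distrib_left[symmetric])
  finally have "(\<Sum>u\<in>V. km w u * sk u v) = sc w * (\<Sum>u\<in>V. sk u v) - (\<Sum>u\<in>V. sc u * sk u v) - 2 * (\<Sum>u\<in>V. sk w u * sk u v)" .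
  then show ?thesis using sk_col sum_sk_sc_col[OF v] unfolding sq2_def by simp
qed

lemma SK: "w \<in> V \<Longrightarrow> v \<in> V \<Longrightarrow> (\<Sum>u\<in>V. sk w u * km u v) = ym w - sc w * sc v - 2 * sq2 w v"
proof -
  assume w: "w \<in> V" and v: "v \<in> V"
  have "(\<Sum>u\<in>V. sk w u * km u v) = (\<Sum>u\<in>V. sk w u * sc u - sc v * sk w u - 2 * (sk w u * sk u v))"
    by (rule sum.cong) (simp_all add: km_def algebra_simps)
  also have "\<dots> = (\<Sum>u\<in>V. sk w u * sc u) - sc v * (\<Sum>u\<in>V. sk w u) - 2 * (\<Sum>u\<in>V. sk w u * sk u v)"
    by (simp only: sum_subtractf sum_distrib_left[symmetric])
  finally have "(\<Sum>u\<in>V. sk w u * km u v) = (\<Sum>u\<in>V. sk w u * sc u) - sc v * (\<Sum>u\<in>V. sk w u) - 2 * (\<Sum>u\<in>V. sk w u * sk u v)" .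
  then show ?thesis using ym_alt[OF w] unfolding sq2_def sc_def[symmetric] by (simp add: algebra_simps)
qed

lemma tC_val: "tC = 4 * yy - 4 * xx - 4 * nn * (nn - 1) * (nn - 1) + (- 2 * nn * nn + 8 * nn - 4) * sg"
proof -
  have "tC = (\<Sum>u\<in>V. \<Sum>v\<in>V. \<Sum>w\<in>V. sk u v * bm v w * km w u) + (\<Sum>u\<in>V. \<Sum>v\<in>V. \<Sum>w\<in>V. sk u v * km v w * bm w u)"
    unfolding tC_def by (simp add: sum.distrib)
  also have "(\<Sum>u\<in>V. \<Sum>v\<in>V. \<Sum>w\<in>V. sk u v * bm v w * km w u) = (\<Sum>v\<in>V. \<Sum>w\<in>V. bm v w * (\<Sum>u\<in>V. km w u * sk u v))"
    by (subst reord_a) (simp add: sum_distrib_left ac_simps)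
  also have "(\<Sum>u\<in>V. \<Sum>v\<in>V. \<Sum>w\<in>V. sk u v * km v w * bm w u) = (\<Sum>w\<in>V. \<Sum>u\<in>V. bm w u * (\<Sum>v\<in>V. sk u v * km v w))"
    by (subst reord_b) (simp add: sum_distrib_left ac_simps)
  finally have "tC = (\<Sum>v\<in>V. \<Sum>w\<in>V. bm v w * ((\<Sum>u\<in>V. km w u * sk u v) + (\<Sum>u\<in>V. sk w u * km u v)))"
    by (simp add: sum.distrib algebra_simps)
  also have "\<dots> = (\<Sum>v\<in>V. \<Sum>w\<in>V. (nn - 1) * (nm v w * ym v) + (nn - 1) * (nm v w * ym w) - (2 * (nn - 1)) * (nm v w * (sc v * sc w))
     - (4 * (nn - 1)) * (nm v w * xm v w) + (4 * nn * (nn - 1)) * (nm v w * dl v w) - (4 * (nn - 1)) * nm v w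
     + xm v w * ym v + xm v w * ym w - 2 * (xm v w * (sc v * sc w)) - 4 * (xm v w * xm v w) + (4 * nn) * (xm v w * dl v w)
     - 4 * xm v w)"
  proof (intro sum.cong refl)
    fix v w assume v: "v \<in> V" and w: "w \<in> V"
    have h: "sq2 w v = xm v w - nn * dl v w + 1" using sq2_sym[of w v] sq2_xm[of v w] by simp
    show "bm v w * ((\<Sum>u\<in>V. km w u * sk u v) + (\<Sum>u\<in>V. sk w u * km u v)) = (nn - 1) * (nm v w * ym v) + (nn - 1) * (nm v w * ym w) - (2 * (nn - 1)) * (nm v w * (sc v * sc w))
     - (4 * (nn - 1)) * (nm v w * xm v w) + (4 * nn * (nn - 1)) * (nm v w * dl v w) - (4 * (nn - 1)) * nm v w
     + xm v w * ym v + xm v w * ym w - 2 * (xm v w * (sc v * sc w)) - 4 * (xm v w * xm v w) + (4 * nn) * (xm v w * dl v w)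
     - 4 * xm v w"
      unfolding KS[OF w v] SK[OF w v] bm_def h by (simp add: algebra_simps)
  qed
  also have "\<dots> = (nn - 1) * (\<Sum>v\<in>V. \<Sum>w\<in>V. nm v w * ym v) + (nn - 1) * (\<Sum>v\<in>V. \<Sum>w\<in>V. nm v w * ym w)
     - (2 * (nn - 1)) * (\<Sum>v\<in>V. \<Sum>w\<in>V. nm v w * (sc v * sc w))
     - (4 * (nn - 1)) * (\<Sum>v\<in>V. \<Sum>w\<in>V. nm v w * xm v w) + (4 * nn * (nn - 1)) * (\<Sum>v\<in>V. \<Sum>w\<in>V. nm v w * dl v w)
     - (4 * (nn - 1)) * (\<Sum>v\<in>V. \<Sum>w\<in>V. nm v w)
     + (\<Sum>v\<in>V. \<Sum>w\<in>V. xm v w * ym v) + (\<Sum>v\<in>V. \<Sum>w\<in>V. xm v w * ym w) - 2 * (\<Sum>v\<in>V. \<Sum>w\<in>V. xm v w * (sc v * sc w))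
     - 4 * (\<Sum>v\<in>V. \<Sum>w\<in>V. xm v w * xm v w) + (4 * nn) * (\<Sum>v\<in>V. \<Sum>w\<in>V. xm v w * dl v w)
     - 4 * (\<Sum>v\<in>V. \<Sum>w\<in>V. xm v w)"
    by (simp only: sum.distrib sum_subtractf sum_distrib_left[symmetric])
  also have "\<dots> = (nn - 1) * (- (nn - 1) * sg) + (nn - 1) * (- (nn - 1) * sg) - (2 * (nn - 1)) * (- sg)
     - (4 * (nn - 1)) * (- sg) + (4 * nn * (nn - 1)) * 0 - (4 * (nn - 1)) * (nn * (nn - 1))
     + yy + yy - 2 * (nn * sg - yy) - 4 * xx + (4 * nn) * 0 - 4 * (- sg)"
    unfolding at_nm_y1 at_nm_y2 at_nm_ss at_nm_x at_nm_dl at_nm at_x_y1 at_x_y2 sXs at_x_x at_x_dl sum_xm ..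
  finally show ?thesis by (simp add: algebra_simps)
qed

lemma main_identity: "32 * t5 = (nn + 1) * nn * (nn - 1) * (nn - 2) * (nn - 3) - 5 * dd"
  unfolding t5_split tA_val tB_val tC_val dd_def by (simp add: algebra_simps power2_eq_square power3_eq_cube)

lemma sg_nonneg: "0 \<le> sg" unfolding sg_def by (simp add: sum_nonneg)

lemma yy_bound: "2 * yy \<le> nn * (nn - 1) * sg"
proof (cases "sg = 0")
  case True
  then have "\<forall>u\<in>V. (sc u)^2 = 0" unfolding sg_def using fin by (subst sum_nonneg_eq_0_iff[symmetric]) auto
  then have "\<forall>u\<in>V. sc u = 0" by simp
  then have "\<forall>u\<in>V. ym u = 0" by (simp add: ym_alt)
  then have "yy = 0" unfolding yy_def by simp
  then show ?thesis using True by simp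
next
  case False
  then have sgp: "0 < sg" using sg_nonneg by simp
  define w where "w i j = ym i * sc j - sc i * ym j" for i j
  have Q: "(\<Sum>i\<in>V. \<Sum>j\<in>V. sk i j * w i j) = 2 * yy"
  proof -
    have "(\<Sum>i\<in>V. \<Sum>j\<in>V. sk i j * w i j) = (\<Sum>i\<in>V. \<Sum>j\<in>V. ym i * (sk i j * sc j)) - (\<Sum>i\<in>V. \<Sum>j\<in>V. ym j * (sc i * sk i j))"
      unfolding w_def by (simp add: sum_subtractf algebra_simps)
    also have "(\<Sum>i\<in>V. \<Sum>j\<in>V. ym i * (sk i j * sc j)) = yy"
      unfolding yy_def power2_eq_square by (rule sum.cong[OF refl]) (simp add: sum_distrib_left[symmetric] ym_alt)
    also have "(\<Sum>i\<in>V. \<Sum>j\<in>V. ym j * (sc i * sk i j)) = (\<Sum>j\<in>V. ym j * (\<Sum>i\<in>V. sc i * sk i j))"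
      by (subst sum.swap) (simp add: sum_distrib_left)
    also have "\<dots> = - yy" unfolding yy_def power2_eq_square by (simp add: sum_sk_sc_col sum_negf)
    finally show ?thesis by simp
  qed
  have G: "(\<Sum>i\<in>V. \<Sum>j\<in>V. (w i j)^2) = 2 * yy * sg"
  proof -
    have "(\<Sum>i\<in>V. \<Sum>j\<in>V. (w i j)^2) = (\<Sum>i\<in>V. \<Sum>j\<in>V. (ym i * ym i) * (sc j * sc j)) - 2 * (\<Sum>i\<in>V. \<Sum>j\<in>V. (ym i * sc i) * (ym j * sc j))
       + (\<Sum>i\<in>V. \<Sum>j\<in>V. (sc i * sc i) * (ym j * ym j))"
    proof -
      have "(w i j)^2 = (ym i * ym i) * (sc j * sc j) - 2 * ((ym i * sc i) * (ym j * sc j)) + (sc i * sc i) * (ym j * ym j)" for i j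
        unfolding w_def by (simp add: power2_eq_square algebra_simps)
      then show ?thesis by (simp only: sum.distrib sum_subtractf sum_distrib_left[symmetric])
    qed
    also have "\<dots> = yy * sg - 2 * ((\<Sum>i\<in>V. ym i * sc i) * (\<Sum>j\<in>V. ym j * sc j)) + sg * yy"
      unfolding yy_def sg_def power2_eq_square sum_product ..
    finally show ?thesis using sum_ym_sc by simp
  qed
  have "0 \<le> (\<Sum>i\<in>V. \<Sum>j\<in>V. (sg * sk i j - w i j)^2)" by (simp add: sum_nonneg)
  also have "\<dots> = sg * sg * (\<Sum>i\<in>V. \<Sum>j\<in>V. sk i j * sk i j) - 2 * sg * (\<Sum>i\<in>V. \<Sum>j\<in>V. sk i j * w i j) + (\<Sum>i\<in>V. \<Sum>j\<in>V. (w i j)^2)"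
  proof -
    have "(sg * sk i j - w i j)^2 = sg * sg * (sk i j * sk i j) - 2 * sg * (sk i j * w i j) + (w i j)^2" for i j
      by (simp add: power2_eq_square algebra_simps)
    then show ?thesis by (simp only: sum.distrib sum_subtractf sum_distrib_left[symmetric])
  qed
  also have "\<dots> = sg * (sg * (nn * (nn - 1)) - 2 * yy)" unfolding at_sk_sk Q G by (simp add: algebra_simps)
  finally have "0 \<le> sg * (sg * (nn * (nn - 1)) - 2 * yy)" .
  then have "0 \<le> sg * (nn * (nn - 1)) - 2 * yy" using sgp by (simp add: zero_le_mult_iff)
  then show ?thesis by (simp add: algebra_simps)
qed

lemma xm_even: assumes odd: "odd nn" and u: "u \<in> V" and v: "v \<in> V" shows "even (xm u v)"
proof (cases "u = v")
  case True then show ?thesis using xm_diag u by simp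
next
  case False
  have "sq2 u v - (nn - 2) = (\<Sum>w\<in>V. sk u w * sk w v - nm u w * nm w v)"
  proof -
    have "(\<Sum>w\<in>V. nm u w * nm w v) = (\<Sum>w\<in>V. nm w v) - nm u v" using sum_nm[OF u, of "\<lambda>w. nm w v"] by simp
    also have "(\<Sum>w\<in>V. nm w v) = nn - 1" using sum_nm'[OF v, of "\<lambda>_. 1"] card_nn by simp
    finally show ?thesis using False unfolding sq2_def by (simp add: sum_subtractf nm_def)
  qed
  also have "\<dots> = (\<Sum>w\<in>V. (sk u w * sk w v) * (1 - sk u w * sk w v))"
  proof (rule sum.cong[OF refl])
    fix w assume w: "w \<in> V"
    have "nm u w * nm w v = (sk u w * sk w v) * (sk u w * sk w v)"
      using sk_sq[OF u w] sk_sq[OF w v] by (simp add: algebra_simps)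
    then show "sk u w * sk w v - nm u w * nm w v = (sk u w * sk w v) * (1 - sk u w * sk w v)"
      by (simp add: algebra_simps)
  qed
  finally have "even (sq2 u v - (nn - 2))" by (auto intro!: dvd_sum)
  then have "odd (sq2 u v)" using odd by simp
  then show ?thesis unfolding xm_def dl_def using False by simp
qed

lemma xx_bound: assumes odd: "odd nn" shows "2 * sg \<le> xx"
proof -
  have "0 \<le> (\<Sum>u\<in>V. \<Sum>v\<in>V. (xm u v)^2 + 2 * xm u v)"
  proof (intro sum_nonneg)
    fix u v assume u: "u \<in> V" and v: "v \<in> V"
    obtain k where k: "xm u v = 2 * k" using xm_even[OF odd u v] by blast
    have "0 \<le> k * (k + 1)" by (cases "k \<ge> 0") (auto simp: mult_nonneg_nonneg mult_nonpos_nonpos)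
    then show "0 \<le> (xm u v)^2 + 2 * xm u v" unfolding k by (simp add: power2_eq_square algebra_simps)
  qed
  also have "\<dots> = xx + 2 * (\<Sum>u\<in>V. \<Sum>v\<in>V. xm u v)" unfolding xx_def by (simp add: sum.distrib sum_distrib_left)
  finally show ?thesis using sum_xm by simp
qed

lemma dd_lower: "2 * dd \<ge> 2 * (xx - 2 * sg) + (nn - 3) * (nn - 4) * sg"
proof -
  have "2 * dd - (2 * (xx - 2 * sg) + (nn - 3) * (nn - 4) * sg) = nn * (nn - 1) * sg - 2 * yy"
    unfolding dd_def by (simp add: algebra_simps power2_eq_square)
  then show ?thesis using yy_bound by linarith
qed

lemma dd_nonneg: assumes "odd nn" "5 \<le> nn" shows "0 \<le> dd"
proof -
  have p: "0 \<le> (nn - 3) * (nn - 4) * sg" using assms sg_nonneg by simp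
  have a: "0 \<le> 2 * (xx - 2 * sg)" using xx_bound[OF assms(1)] by simp
  have "0 \<le> 2 * (xx - 2 * sg) + (nn - 3) * (nn - 4) * sg" using a p by (rule add_nonneg_nonneg)
  then have "0 \<le> 2 * dd" using dd_lower by (rule order_trans)
  then show ?thesis by simp
qed

lemma dd_zero: assumes "odd nn" "5 \<le> nn" shows "dd = 0 \<longleftrightarrow> (\<forall>u\<in>V. sc u = 0) \<and> (\<forall>u\<in>V. \<forall>v\<in>V. xm u v = 0)"
proof
  assume d0: "dd = 0"
  have p: "0 < (nn - 3) * (nn - 4)" using assms by simp
  have q: "0 \<le> (nn - 3) * (nn - 4) * sg" using p sg_nonneg by simp
  have gen: "P = 0 \<and> xx \<le> 2 * sg" if "0 \<le> P" "2 * (xx - 2 * sg) + P \<le> 2 * dd" for P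
    using that xx_bound[OF assms(1)] d0 by presburger
  have g: "(nn - 3) * (nn - 4) * sg = 0 \<and> xx \<le> 2 * sg" using gen[OF q dd_lower] .
  then have sg0: "sg = 0" using assms by auto
  have "0 \<le> xx" unfolding xx_def by (simp add: sum_nonneg)
  then have "xx = 0" using g sg0 by simp
  then have "\<forall>u\<in>V. \<forall>v\<in>V. (xm u v)^2 = 0" unfolding xx_def using fin
    by (subst (asm) sum_nonneg_eq_0_iff) (auto simp: sum_nonneg_eq_0_iff sum_nonneg)
  moreover have "\<forall>u\<in>V. (sc u)^2 = 0" using sg0 unfolding sg_def using fin by (subst (asm) sum_nonneg_eq_0_iff) auto
  ultimately show "(\<forall>u\<in>V. sc u = 0) \<and> (\<forall>u\<in>V. \<forall>v\<in>V. xm u v = 0)" by simp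
next
  assume h: "(\<forall>u\<in>V. sc u = 0) \<and> (\<forall>u\<in>V. \<forall>v\<in>V. xm u v = 0)"
  then have "sg = 0" "xx = 0" unfolding sg_def xx_def by simp_all
  moreover have "yy = 0" using h unfolding yy_def ym_def by simp
  ultimately show "dd = 0" unfolding dd_def by simp
qed

lemma ind_card: "(\<Sum>w\<in>V. (if P w then 1 else 0)::int) = int (card {w\<in>V. P w})"
proof -
  have "int (card {w\<in>V. P w}) = (\<Sum>w\<in>{w\<in>V. P w}. (1::int))" by simp
  also have "\<dots> = (\<Sum>w\<in>V. (if P w then 1 else 0))" by (rule sum.inter_filter[OF fin])
  finally show ?thesis by simp
qed

definition dg :: "'a \<Rightarrow> int" where "dg u = (\<Sum>w\<in>V. ar u w)"
definition cm :: "'a \<Rightarrow> 'a \<Rightarrow> int" where "cm u v = (\<Sum>w\<in>V. ar u w * ar v w)"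

lemma dg_card: "dg u = int (card (out_nbrs V E u))"
  unfolding dg_def ar_def out_nbrs_def by (rule ind_card)

lemma cm_card: "cm u v = int (card {w\<in>V. E u w \<and> E v w})"
  unfolding cm_def ar_def by (simp add: ind_card[symmetric] if_distrib cong: if_cong) (rule sum.cong, auto)

lemma cm_sym: "cm u v = cm v u" unfolding cm_def by (simp add: mult.commute)

lemma sc_dg: "u \<in> V \<Longrightarrow> sc u = 2 * dg u - (nn - 1)"
proof -
  assume u: "u \<in> V"
  have "sc u = dg u - (\<Sum>w\<in>V. ar w u)" unfolding sc_def sk_def dg_def by (simp add: sum_subtractf)
  also have "(\<Sum>w\<in>V. ar w u) = (\<Sum>w\<in>V. nm u w * 1 - ar u w)"
    by (rule sum.cong[OF refl]) (use ar_sum[OF u] in \<open>simp add: algebra_simps\<close>)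
  also have "\<dots> = (nn - 1) - dg u"
    unfolding dg_def sum_subtractf using sum_nm[OF u, of "\<lambda>_. 1"] card_nn by simp
  finally show ?thesis by simp
qed

lemma xm_cm: assumes u: "u \<in> V" and v: "v \<in> V" and uv: "u \<noteq> v"
  shows "xm u v = sc u + sc v + nn - 3 - 4 * cm u v"
proof -
  have "sq2 u v = - (\<Sum>w\<in>V. sk u w * sk v w)"
    unfolding sq2_def by (subst sum_negf[symmetric], rule sum.cong) (auto simp: sk_skew[of _ v])
  also have "(\<Sum>w\<in>V. sk u w * sk v w) = (\<Sum>w\<in>V. 4 * (ar u w * ar v w) - 2 * (nm v w * ar u w) - 2 * (nm u w * ar v w) + nm u w * nm v w)"
  proof (rule sum.cong[OF refl])
    fix w assume w: "w \<in> V"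
    have h1: "sk u w = 2 * ar u w - nm u w" using ar_split[OF u w] by linarith
    have h2: "sk v w = 2 * ar v w - nm v w" using ar_split[OF v w] by linarith
    show "sk u w * sk v w = 4 * (ar u w * ar v w) - 2 * (nm v w * ar u w) - 2 * (nm u w * ar v w) + nm u w * nm v w"
      unfolding h1 h2 by (simp add: algebra_simps)
  qed
  also have "\<dots> = 4 * cm u v - 2 * (\<Sum>w\<in>V. nm v w * ar u w) - 2 * (\<Sum>w\<in>V. nm u w * ar v w) + (\<Sum>w\<in>V. nm u w * nm v w)"
    unfolding cm_def by (simp only: sum.distrib sum_subtractf sum_distrib_left[symmetric])
  also have "(\<Sum>w\<in>V. nm v w * ar u w) = dg u - ar u v" using sum_nm[OF v, of "ar u"] unfolding dg_def .
  also have "(\<Sum>w\<in>V. nm u w * ar v w) = dg v - ar v u" using sum_nm[OF u, of "ar v"] unfolding dg_def .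
  also have "(\<Sum>w\<in>V. nm u w * nm v w) = (nn - 1) - 1"
  proof -
    have "(\<Sum>w\<in>V. nm u w * nm v w) = (\<Sum>w\<in>V. nm v w) - nm v u" using sum_nm[OF u, of "nm v"] .
    also have "(\<Sum>w\<in>V. nm v w) = nn - 1" using sum_nm[OF v, of "\<lambda>_. 1"] card_nn by simp
    finally show ?thesis using uv by (simp add: nm_def)
  qed
  finally have "sq2 u v = - (4 * cm u v - 2 * (dg u - ar u v) - 2 * (dg v - ar v u) + (nn - 1 - 1))" .
  moreover have "ar u v + ar v u = 1" using ar_sum[OF u v] uv by (simp add: nm_def)
  ultimately show ?thesis unfolding xm_def sc_dg[OF u] sc_dg[OF v] dl_def using uv by (simp add: algebra_simps)
qed

lemma out_out: "out_nbrs (out_nbrs V E v) E u = {w\<in>V. E u w \<and> E v w}"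
  unfolding out_nbrs_def by auto

lemma dr_iff: assumes odd: "odd nn"
  shows "doubly_regular V E \<longleftrightarrow> (\<forall>u\<in>V. sc u = 0) \<and> (\<forall>u\<in>V. \<forall>v\<in>V. xm u v = 0)"
proof
  assume dr: "doubly_regular V E"
  have reg: "2 * dg u + 1 = nn" if "u \<in> V" for u
  proof -
    have "2 * card (out_nbrs V E u) + 1 = card V" using dr that unfolding doubly_regular_def regular_on_def by blast
    then have "int (2 * card (out_nbrs V E u) + 1) = int (card V)" by simp
    then show ?thesis unfolding dg_card nn_def by simp
  qed
  have sc0: "\<forall>u\<in>V. sc u = 0" using reg sc_dg by fastforce
  have half: "2 * cm u v + 1 = dg v" if u: "u \<in> V" and v: "v \<in> V" and e: "E v u" for u v
  proof -
    have "u \<in> out_nbrs V E v" using u e unfolding out_nbrs_def by simp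
    then have "2 * card (out_nbrs (out_nbrs V E v) E u) + 1 = card (out_nbrs V E v)"
      using dr v unfolding doubly_regular_def regular_on_def by blast
    then have "int (2 * card (out_nbrs (out_nbrs V E v) E u) + 1) = int (card (out_nbrs V E v))" by simp
    then show ?thesis unfolding dg_card cm_card out_out by simp
  qed
  have "\<forall>u\<in>V. \<forall>v\<in>V. xm u v = 0"
  proof (intro ballI)
    fix u v assume u: "u \<in> V" and v: "v \<in> V"
    show "xm u v = 0"
    proof (cases "u = v")
      case True then show ?thesis using xm_diag u by simp
    next
      case False
      then have "E v u \<or> E u v" using E_tot u v by blast
      then have "2 * cm u v + 1 = dg v \<or> 2 * cm u v + 1 = dg u"
        using half[OF u v] half[OF v u] cm_sym[of u v] by auto
      then show ?thesis using xm_cm[OF u v False] sc0 u v reg[OF u] reg[OF v] sc_dg[OF u] sc_dg[OF v] by auto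
    qed
  qed
  with sc0 show "(\<forall>u\<in>V. sc u = 0) \<and> (\<forall>u\<in>V. \<forall>v\<in>V. xm u v = 0)" by simp
next
  assume h: "(\<forall>u\<in>V. sc u = 0) \<and> (\<forall>u\<in>V. \<forall>v\<in>V. xm u v = 0)"
  have reg: "2 * dg u + 1 = nn" if "u \<in> V" for u using h sc_dg[OF that] that by auto
  have r1: "regular_on V E" unfolding regular_on_def
  proof
    fix u assume u: "u \<in> V"
    have "int (2 * card (out_nbrs V E u) + 1) = int (card V)" using reg[OF u] unfolding dg_card nn_def by simp
    then show "2 * card (out_nbrs V E u) + 1 = card V" by (simp only: of_nat_eq_iff)
  qed
  have r2: "regular_on (out_nbrs V E v) E" if v: "v \<in> V" for v
    unfolding regular_on_def
  proof
    fix u assume uo: "u \<in> out_nbrs V E v"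
    then have u: "u \<in> V" and e: "E v u" unfolding out_nbrs_def by auto
    then have uv: "u \<noteq> v" using E_in by blast
    have "xm u v = 0" using h u v by blast
    then have "4 * cm u v = nn - 3" using xm_cm[OF u v uv] h u v by auto
    then have "2 * cm u v + 1 = dg v" using reg[OF v] by simp
    then have "int (2 * card (out_nbrs (out_nbrs V E v) E u) + 1) = int (card (out_nbrs V E v))"
      unfolding dg_card cm_card out_out by simp
    then show "2 * card (out_nbrs (out_nbrs V E v) E u) + 1 = card (out_nbrs V E v)" by (simp only: of_nat_eq_iff)
  qed
  show "doubly_regular V E" unfolding doubly_regular_def using r1 r2 by blast
qed

definition wl :: "'a list set" where
  "wl = {xs. length xs = 5 \<and> distinct xs \<and> set xs \<subseteq> V \<and> (\<forall>(a, b) \<in> cyc_arcs xs. E a b)}"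

definition tt :: "('a \<times> 'a \<times> 'a \<times> 'a \<times> 'a) set" where
  "tt = {t \<in> V \<times> V \<times> V \<times> V \<times> V. case t of (u, v, w, x, z) \<Rightarrow> E u v \<and> E v x \<and> E x w \<and> E w z \<and> E z u}"

lemma cyc5: "cyc_arcs [a, b, c, d, e] = {(a, b), (b, c), (c, d), (d, e), (e, a)}"
  by (simp add: cyc_arcs_def)

lemma len5: "length xs = 5 \<Longrightarrow> \<exists>a b c d e. xs = [a, b, c, d, e]"
  by (simp add: numeral_eq_Suc length_Suc_conv) blast

lemma t5_count: "t5 = int (card tt)"
proof -
  have "t5 = (\<Sum>u\<in>V. \<Sum>v\<in>V. \<Sum>w\<in>V. \<Sum>x\<in>V. \<Sum>z\<in>V.
      (if E u v \<and> E v x \<and> E x w \<and> E w z \<and> E z u then 1 else 0))"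
    unfolding t5_def pp_def
  proof (intro sum.cong refl)
    fix u v w
    have "ar u v * (\<Sum>x\<in>V. ar v x * ar x w) * (\<Sum>z\<in>V. ar w z * ar z u)
        = (\<Sum>x\<in>V. \<Sum>z\<in>V. ar u v * (ar v x * ar x w) * (ar w z * ar z u))"
      by (simp only: sum_distrib_left[symmetric] sum_distrib_right[symmetric])
    also have "\<dots> = (\<Sum>x\<in>V. \<Sum>z\<in>V. (if E u v \<and> E v x \<and> E x w \<and> E w z \<and> E z u then 1 else 0))"
      by (intro sum.cong refl) (simp add: ar_def)
    finally show "ar u v * (\<Sum>x\<in>V. ar v x * ar x w) * (\<Sum>z\<in>V. ar w z * ar z u)
        = (\<Sum>x\<in>V. \<Sum>z\<in>V. (if E u v \<and> E v x \<and> E x w \<and> E w z \<and> E z u then 1 else 0))" .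
  qed
  also have "\<dots> = (\<Sum>t\<in>V \<times> V \<times> V \<times> V \<times> V. (if (case t of (u, v, w, x, z) \<Rightarrow> E u v \<and> E v x \<and> E x w \<and> E w z \<and> E z u) then 1 else 0))"
    by (simp only: sum.cartesian_product' prod.case)
  also have "\<dots> = int (card tt)"
  proof -
    have "int (card tt) = (\<Sum>t\<in>tt. (1::int))" by simp
    also have "\<dots> = (\<Sum>t\<in>V \<times> V \<times> V \<times> V \<times> V. (if (case t of (u, v, w, x, z) \<Rightarrow> E u v \<and> E v x \<and> E x w \<and> E w z \<and> E z u) then 1 else 0))"
      unfolding tt_def using fin by (intro sum.inter_filter) simp
    finally show ?thesis by simp
  qed
  finally show ?thesis .
qed

lemma tt_wl: "bij_betw (\<lambda>(u, v, w, x, z). [u, v, x, w, z]) tt wl"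
  unfolding bij_betw_def
proof
  show "inj_on (\<lambda>(u, v, w, x, z). [u, v, x, w, z]) tt" by (auto simp: inj_on_def)
  show "(\<lambda>(u, v, w, x, z). [u, v, x, w, z]) ` tt = wl"
  proof
    show "(\<lambda>(u, v, w, x, z). [u, v, x, w, z]) ` tt \<subseteq> wl"
    proof
      fix xs assume "xs \<in> (\<lambda>(u, v, w, x, z). [u, v, x, w, z]) ` tt"
      then obtain u v w x z where xs: "xs = [u, v, x, w, z]" and
        V5: "u \<in> V" "v \<in> V" "w \<in> V" "x \<in> V" "z \<in> V" and
        e: "E u v" "E v x" "E x w" "E w z" "E z u" unfolding tt_def by auto
      have "distinct xs" unfolding xs using e E_in E_asym by auto
      then show "xs \<in> wl" unfolding wl_def xs using V5 e by (simp add: cyc5)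
    qed
    show "wl \<subseteq> (\<lambda>(u, v, w, x, z). [u, v, x, w, z]) ` tt"
    proof
      fix xs assume xs: "xs \<in> wl"
      then obtain a b c d e where xe: "xs = [a, b, c, d, e]" unfolding wl_def using len5 by blast
      have "(a, b, d, c, e) \<in> tt" using xs unfolding xe wl_def tt_def by (simp add: cyc5)
      then show "xs \<in> (\<lambda>(u, v, w, x, z). [u, v, x, w, z]) ` tt" unfolding xe by force
    qed
  qed
qed

lemma card_wl: "card wl = card tt" using tt_wl by (simp add: bij_betw_same_card)

lemma fin_wl: "finite wl"
proof -
  have "finite tt" unfolding tt_def using fin by simp
  then show ?thesis using tt_wl bij_betw_finite by blast
qed

lemma fiber: assumes xs: "[a, b, c, d, e] \<in> wl"
  shows "{ys \<in> wl. cyc_arcs ys = cyc_arcs [a, b, c, d, e]} =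
     {[a, b, c, d, e], [b, c, d, e, a], [c, d, e, a, b], [d, e, a, b, c], [e, a, b, c, d]}"
proof
  have dist: "distinct [a, b, c, d, e]" using xs unfolding wl_def by blast
  show "{ys \<in> wl. cyc_arcs ys = cyc_arcs [a, b, c, d, e]} \<subseteq>
     {[a, b, c, d, e], [b, c, d, e, a], [c, d, e, a, b], [d, e, a, b, c], [e, a, b, c, d]}"
  proof
    fix ys assume ys: "ys \<in> {ys \<in> wl. cyc_arcs ys = cyc_arcs [a, b, c, d, e]}"
    then obtain p q r s t where ye: "ys = [p, q, r, s, t]" unfolding wl_def using len5 by blast
    have C: "{(p, q), (q, r), (r, s), (s, t), (t, p)} = {(a, b), (b, c), (c, d), (d, e), (e, a)}"
      using ys unfolding ye by (simp add: cyc5)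
    have succ: "\<And>y. (x, y) \<in> {(a, b), (b, c), (c, d), (d, e), (e, a)} \<Longrightarrow> (x, y') \<in> {(a, b), (b, c), (c, d), (d, e), (e, a)} \<Longrightarrow> y = y'" for x y'
      using dist by auto
    have pq: "(p, q) \<in> {(a, b), (b, c), (c, d), (d, e), (e, a)}" using C by blast
    have qr: "(q, r) \<in> {(a, b), (b, c), (c, d), (d, e), (e, a)}" using C by blast
    have rs: "(r, s) \<in> {(a, b), (b, c), (c, d), (d, e), (e, a)}" using C by blast
    have st: "(s, t) \<in> {(a, b), (b, c), (c, d), (d, e), (e, a)}" using C by blast
    show "ys \<in> {[a, b, c, d, e], [b, c, d, e, a], [c, d, e, a, b], [d, e, a, b, c], [e, a, b, c, d]}"
      unfolding ye using pq qr rs st dist by auto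
  qed
  show "{[a, b, c, d, e], [b, c, d, e, a], [c, d, e, a, b], [d, e, a, b, c], [e, a, b, c, d]}
     \<subseteq> {ys \<in> wl. cyc_arcs ys = cyc_arcs [a, b, c, d, e]}"
    using xs unfolding wl_def by (auto simp: cyc5)
qed

lemma cycles_img: "cycles5 V E = cyc_arcs ` wl"
  unfolding cycles5_def wl_def by blast

lemma card_wl5: "card wl = 5 * card (cycles5 V E)"
proof -
  define F where "F C = {ys \<in> wl. cyc_arcs ys = C}" for C
  have fI: "finite (cyc_arcs ` wl)" using fin_wl by simp
  have U: "\<Union> (F ` (cyc_arcs ` wl)) = wl" unfolding F_def by auto
  have "card (\<Union> (F ` (cyc_arcs ` wl))) = (\<Sum>C\<in>cyc_arcs ` wl. card (F C))"
    by (rule card_UN_disjoint) (use fI fin_wl in \<open>auto simp: F_def\<close>)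
  also have "\<dots> = (\<Sum>C\<in>cyc_arcs ` wl. 5)"
  proof (rule sum.cong[OF refl])
    fix C assume "C \<in> cyc_arcs ` wl"
    then obtain xs where xs: "xs \<in> wl" and C: "C = cyc_arcs xs" by blast
    then obtain a b c d e where xe: "xs = [a, b, c, d, e]" unfolding wl_def using len5 by blast
    have dist: "distinct [a, b, c, d, e]" using xs unfolding xe wl_def by blast
    have "F C = {[a, b, c, d, e], [b, c, d, e, a], [c, d, e, a, b], [d, e, a, b, c], [e, a, b, c, d]}"
      unfolding F_def C xe using fiber xs xe by simp
    then show "card (F C) = 5" using dist by simp
  qed
  finally show ?thesis using U cycles_img by simp
qed

lemma c5_t5: "t5 = 5 * int (c5 V E)"
  unfolding c5_def t5_count card_wl[symmetric] card_wl5 by simp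

end

theorem theorem1:
  fixes V :: "'a set" and E :: "'a \<Rightarrow> 'a \<Rightarrow> bool"
  assumes "tournament V E" and "odd (card V)" and "card V \<ge> 5"
  shows "real (c5 V E) \<le> (real (card V) + 1) * real (card V) * (real (card V) - 1)
                            * (real (card V) - 2) * (real (card V) - 3) / 160
     \<and> (real (c5 V E) = (real (card V) + 1) * real (card V) * (real (card V) - 1)
                            * (real (card V) - 2) * (real (card V) - 3) / 160
         \<longleftrightarrow> doubly_regular V E)"
proof -
  interpret tourn V E by (rule tourn.intro) (rule assms(1))
  have odd: "odd nn" unfolding nn_def using assms(2) by simp
  have ge5: "5 \<le> nn" unfolding nn_def using assms(3) by simp
  have id: "160 * int (c5 V E) = (nn + 1) * nn * (nn - 1) * (nn - 2) * (nn - 3) - 5 * dd"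
    using main_identity c5_t5 by simp
  define P where "P = (real (card V) + 1) * real (card V) * (real (card V) - 1) * (real (card V) - 2) * (real (card V) - 3)"
  have idr: "160 * real (c5 V E) = P - 5 * real_of_int dd"
  proof -
    have "real_of_int (160 * int (c5 V E)) = real_of_int ((nn + 1) * nn * (nn - 1) * (nn - 2) * (nn - 3) - 5 * dd)"
      using id by simp
    then show ?thesis unfolding P_def nn_def by simp
  qed
  have d0: "0 \<le> dd" by (rule dd_nonneg[OF odd ge5])
  have le: "real (c5 V E) \<le> P / 160" using idr d0 by simp
  have "real (c5 V E) = P / 160 \<longleftrightarrow> dd = 0" using idr by auto
  also have "\<dots> \<longleftrightarrow> doubly_regular V E" using dd_zero[OF odd ge5] dr_iff[OF odd] by simp
  finally show ?thesis using le unfolding P_def by simp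
qed

end
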